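(* Let $K$ be a field and $m,n,r$ positive integers. Let $R=K[x_{ij}^k \mid 1\le i\le m,\ 1\le j\le n,\ 1\le k\le r]$ and let $I_{mn}^r$ be the ideal generated by all $2$-minors of the horizontal concatenation $H=(X_1\ \cdots\ X_r)$ and all $2$-minors of the vertical concatenation $V$ of the $m\times n$ matrices $X_k=(x_{ij}^k)$. Fix a diagonal term order, and let $\Delta$ be the simplicial complex whose Stanley–Reisner ideal is $\operatorname{in}(I_{mn}^r)$. Then there is a bijection between the set of facets of $\Delta$ and the set of words on the multiset $\{M^{m-1},N^{n-1},R^{r-1}\}$ (i.e. words containing exactly $m-1$ letters $M$, $n-1$ letters $N$ and $r-1$ letters $R$).
   Context: A term order is diagonal if the leading term of every $2$-minor of $H$ and of $V$ is the product of the entries on its main diagonal. *)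

theory Defs
  imports Complex_Main "HOL-Library.Poly_Mapping"
begin

text \<open>Variables x_{ij}^k are encoded as triples (i,j,k) :: nat \<times> nat \<times> nat.\<close>

type_synonym var = "nat \<times> nat \<times> nat"
type_synonym mon = "var \<Rightarrow>\<^sub>0 nat"
type_synonym 'a mpoly = "mon \<Rightarrow>\<^sub>0 'a"

definition varset :: "nat \<Rightarrow> nat \<Rightarrow> nat \<Rightarrow> var set" where
  "varset m n r = {(i,j,k). 1 \<le> i \<and> i \<le> m \<and> 1 \<le> j \<and> j \<le> n \<and> 1 \<le> k \<and> k \<le> r}"

definition ring_R :: "nat \<Rightarrow> nat \<Rightarrow> nat \<Rightarrow> ('a::field) mpoly set" where
  "ring_R m n r = {f :: 'a mpoly. \<forall>t \<in> Poly_Mapping.keys f. Poly_Mapping.keys t \<subseteq> varset m n r}"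

inductive_set ideal_gen :: "('a::field) mpoly set \<Rightarrow> 'a mpoly set \<Rightarrow> 'a mpoly set"
  for S G where
  zero: "0 \<in> ideal_gen S G"
| gen: "g \<in> G \<Longrightarrow> g \<in> ideal_gen S G"
| add: "f \<in> ideal_gen S G \<Longrightarrow> h \<in> ideal_gen S G \<Longrightarrow> f + h \<in> ideal_gen S G"
| mult: "f \<in> ideal_gen S G \<Longrightarrow> q \<in> S \<Longrightarrow> q * f \<in> ideal_gen S G"

definition var_mon :: "var \<Rightarrow> mon" where
  "var_mon v = Poly_Mapping.single v 1"

definition diag_mon :: "(nat \<Rightarrow> nat \<Rightarrow> var) \<Rightarrow> nat \<Rightarrow> nat \<Rightarrow> nat \<Rightarrow> nat \<Rightarrow> mon" where
  "diag_mon X a b c d = var_mon (X a c) + var_mon (X b d)"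

definition antidiag_mon :: "(nat \<Rightarrow> nat \<Rightarrow> var) \<Rightarrow> nat \<Rightarrow> nat \<Rightarrow> nat \<Rightarrow> nat \<Rightarrow> mon" where
  "antidiag_mon X a b c d = var_mon (X a d) + var_mon (X b c)"

definition minor2 :: "(nat \<Rightarrow> nat \<Rightarrow> var) \<Rightarrow> nat \<Rightarrow> nat \<Rightarrow> nat \<Rightarrow> nat \<Rightarrow> ('a::field) mpoly" where
  "minor2 X a b c d = Poly_Mapping.single (diag_mon X a b c d) 1
                     - Poly_Mapping.single (antidiag_mon X a b c d) 1"

definition minor_idx :: "nat \<Rightarrow> nat \<Rightarrow> (nat \<times> nat \<times> nat \<times> nat) set" where
  "minor_idx p q = {(a,b,c,d). 1 \<le> a \<and> a < b \<and> b \<le> p \<and> 1 \<le> c \<and> c < d \<and> d \<le> q}"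

text \<open>H = (X_1 ... X_r), an m \<times> (n r) matrix; column (k-1)n + j holds column j of X_k.\<close>
definition Hmat :: "nat \<Rightarrow> nat \<Rightarrow> nat \<Rightarrow> nat \<Rightarrow> nat \<Rightarrow> var" where
  "Hmat m n r i c = (i, (c - 1) mod n + 1, (c - 1) div n + 1)"

text \<open>V = vertical concatenation of X_1,...,X_r, an (m r) \<times> n matrix; row (k-1)m + i holds row i of X_k.\<close>
definition Vmat :: "nat \<Rightarrow> nat \<Rightarrow> nat \<Rightarrow> nat \<Rightarrow> nat \<Rightarrow> var" where
  "Vmat m n r s j = ((s - 1) mod m + 1, j, (s - 1) div m + 1)"

definition minors_H :: "nat \<Rightarrow> nat \<Rightarrow> nat \<Rightarrow> ('a::field) mpoly set" where
  "minors_H m n r = {minor2 (Hmat m n r) a b c d | a b c d. (a,b,c,d) \<in> minor_idx m (n*r)}"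

definition minors_V :: "nat \<Rightarrow> nat \<Rightarrow> nat \<Rightarrow> ('a::field) mpoly set" where
  "minors_V m n r = {minor2 (Vmat m n r) a b c d | a b c d. (a,b,c,d) \<in> minor_idx (m*r) n}"

definition I_mnr :: "nat \<Rightarrow> nat \<Rightarrow> nat \<Rightarrow> ('a::field) mpoly set" where
  "I_mnr m n r = ideal_gen (ring_R m n r) (minors_H m n r \<union> minors_V m n r)"

definition term_order :: "(mon \<Rightarrow> mon \<Rightarrow> bool) \<Rightarrow> bool" where
  "term_order le \<longleftrightarrow>
     (\<forall>s. le s s) \<and> (\<forall>s t. le s t \<and> le t s \<longrightarrow> s = t) \<and>
     (\<forall>s t u. le s t \<and> le t u \<longrightarrow> le s u) \<and> (\<forall>s t. le s t \<or> le t s) \<and>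
     wfP (\<lambda>s t. le s t \<and> s \<noteq> t) \<and>
     (\<forall>t. le 0 t) \<and> (\<forall>s t u. le s t \<longrightarrow> le (s + u) (t + u))"

definition lead_mon :: "(mon \<Rightarrow> mon \<Rightarrow> bool) \<Rightarrow> ('a::zero) mpoly \<Rightarrow> mon" where
  "lead_mon le f = (THE t. t \<in> Poly_Mapping.keys f \<and> (\<forall>s \<in> Poly_Mapping.keys f. le s t))"

definition diagonal_order :: "nat \<Rightarrow> nat \<Rightarrow> nat \<Rightarrow> (mon \<Rightarrow> mon \<Rightarrow> bool) \<Rightarrow> bool" where
  "diagonal_order m n r le \<longleftrightarrow>
     (\<forall>(a,b,c,d) \<in> minor_idx m (n*r).
        lead_mon le (minor2 (Hmat m n r) a b c d :: rat mpoly) = diag_mon (Hmat m n r) a b c d) \<and>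
     (\<forall>(a,b,c,d) \<in> minor_idx (m*r) n.
        lead_mon le (minor2 (Vmat m n r) a b c d :: rat mpoly) = diag_mon (Vmat m n r) a b c d)"

definition init_mons :: "nat \<Rightarrow> nat \<Rightarrow> nat \<Rightarrow> (mon \<Rightarrow> mon \<Rightarrow> bool) \<Rightarrow> ('a::field) mpoly set \<Rightarrow> mon set" where
  "init_mons m n r le I = {t. Poly_Mapping.keys t \<subseteq> varset m n r \<and>
       (\<exists>f \<in> I. f \<noteq> 0 \<and> (\<exists>u. t = lead_mon le f + u))}"

definition sqfree_mon :: "var set \<Rightarrow> mon" where
  "sqfree_mon F = (\<Sum>v\<in>F. var_mon v)"

definition SR_complex :: "nat \<Rightarrow> nat \<Rightarrow> nat \<Rightarrow> (mon \<Rightarrow> mon \<Rightarrow> bool) \<Rightarrow> ('a::field) mpoly set \<Rightarrow> var set set" where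
  "SR_complex m n r le I = {F. F \<subseteq> varset m n r \<and> sqfree_mon F \<notin> init_mons m n r le I}"

definition facets :: "'v set set \<Rightarrow> 'v set set" where
  "facets D = {F \<in> D. \<forall>G \<in> D. F \<subseteq> G \<longrightarrow> G = F}"

datatype letter = LM | LN | LR

definition words :: "nat \<Rightarrow> nat \<Rightarrow> nat \<Rightarrow> letter list set" where
  "words m n r = {w. count_list w LM = m - 1 \<and> count_list w LN = n - 1 \<and> count_list w LR = r - 1}"

end

theory Submission
  imports Defs "HOL-Library.Multiset"
begin


definition Dg :: "var \<Rightarrow> var \<Rightarrow> bool" where
  "Dg p q = (case p of (i,j,k) \<Rightarrow> case q of (i',j',k') \<Rightarrow>
     (i < i' \<and> (k < k' \<or> k = k' \<and> j < j')) \<or> ((k < k' \<or> k = k' \<and> i < i') \<and> j < j'))"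

lemma Dg_simp: "Dg (i,j,k) (i',j',k') \<longleftrightarrow>
     (i < i' \<and> (k < k' \<or> k = k' \<and> j < j')) \<or> ((k < k' \<or> k = k' \<and> i < i') \<and> j < j')"
  by (simp add: Dg_def)

definition cliq :: "var set \<Rightarrow> bool" where
  "cliq S \<longleftrightarrow> (\<forall>p\<in>S. \<forall>q\<in>S. \<not> Dg p q)"

abbreviation cM :: "letter list \<Rightarrow> nat" where "cM u \<equiv> count_list u LM"
abbreviation cN :: "letter list \<Rightarrow> nat" where "cN u \<equiv> count_list u LN"

fun stair :: "letter list \<Rightarrow> nat \<Rightarrow> nat \<Rightarrow> (nat \<times> nat) set" where
  "stair [] i j = {(i,j)}"
| "stair (x#u) i j = insert (i,j) (case x of LM \<Rightarrow> stair u (Suc i) j | LN \<Rightarrow> stair u i (j - 1) | LR \<Rightarrow> stair u i j)"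

definition nolr :: "letter list \<Rightarrow> bool" where "nolr u \<longleftrightarrow> LR \<notin> set u"

lemma stair_bounds: "(x,y) \<in> stair s i j \<Longrightarrow> i \<le> x \<and> x \<le> i + cM s \<and> y \<le> j \<and> j \<le> y + cN s"
proof (induction s arbitrary: i j)
  case Nil then show ?case by simp
next
  case (Cons a s)
  show ?case
  proof (cases "(x,y) = (i,j)")
    case True then show ?thesis by simp
  next
    case False
    show ?thesis
    proof (cases a)
      case LM with Cons False show ?thesis by fastforce
    next
      case LN with Cons False show ?thesis by fastforce
    next
      case LR with Cons False show ?thesis by fastforce
    qed
  qed
qed

lemma stair_start: "(i,j) \<in> stair s i j"
  by (cases s) auto

lemma stair_end: "nolr s \<Longrightarrow> (i + cM s, j - cN s) \<in> stair s i j"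
proof (induction s arbitrary: i j)
  case Nil then show ?case by simp
next
  case (Cons a s)
  then have "nolr s" "a \<noteq> LR" by (auto simp: nolr_def)
  show ?case
  proof (cases a)
    case LM then show ?thesis using Cons.IH[of "Suc i" j] \<open>nolr s\<close> by simp
  next
    case LN
    have e: "j - Suc (cN s) = (j - 1) - cN s" by simp
    show ?thesis using Cons.IH[of i "j-1"] \<open>nolr s\<close> LN by (simp only: e) simp
  next
    case LR then show ?thesis using \<open>a \<noteq> LR\<close> by simp
  qed
qed

lemma stair_anti: "p \<in> stair s i j \<Longrightarrow> q \<in> stair s i j \<Longrightarrow> \<not> (fst p < fst q \<and> snd p < snd q)"
proof (induction s arbitrary: i j p q)
  case Nil then show ?case by simp
next
  case (Cons a s)
  obtain x y where p: "p = (x,y)" by (cases p)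
  obtain x' y' where q: "q = (x',y')" by (cases q)
  have bd: "i \<le> x \<and> y \<le> j" if "(x,y) \<in> stair (a#s) i j" for x y
    using stair_bounds[OF that] by simp
  have bd2: "(x,y) = (i,j) \<or> (x,y) \<in> stair s i j \<or> (x,y) \<in> stair s (Suc i) j \<or> (x,y) \<in> stair s i (j-1)"
    if "(x,y) \<in> stair (a#s) i j" for x y
    using that by (cases a) auto
  show ?case
  proof (cases a)
    case LM
    then have "p = (i,j) \<or> p \<in> stair s (Suc i) j" "q = (i,j) \<or> q \<in> stair s (Suc i) j"
      using Cons.prems by auto
    moreover have "Suc i \<le> fst p'" "snd p' \<le> j" if "p' \<in> stair s (Suc i) j" for p'
      using stair_bounds[of "fst p'" "snd p'" s "Suc i" j] that by auto
    ultimately show ?thesis using Cons.IH[of p "Suc i" j q] by fastforce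
  next
    case LN
    then have "p = (i,j) \<or> p \<in> stair s i (j-1)" "q = (i,j) \<or> q \<in> stair s i (j-1)"
      using Cons.prems by auto
    moreover have "i \<le> fst p'" "snd p' \<le> j - 1" if "p' \<in> stair s i (j-1)" for p'
      using stair_bounds[of "fst p'" "snd p'" s i "j-1"] that by auto
    ultimately show ?thesis using Cons.IH[of p i "j-1" q] by fastforce
  next
    case LR
    then have "p = (i,j) \<or> p \<in> stair s i j" "q = (i,j) \<or> q \<in> stair s i j"
      using Cons.prems by auto
    moreover have "i \<le> fst p'" "snd p' \<le> j" if "p' \<in> stair s i j" for p'
      using stair_bounds[of "fst p'" "snd p'" s i j] that by auto
    ultimately show ?thesis using Cons.IH[of p i j q] by fastforce
  qed
qed

lemma finite_stair: "finite (stair s i j)"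
  by (induction s arbitrary: i j) (auto split: letter.split)

lemma card_stair: "nolr s \<Longrightarrow> cN s \<le> j \<Longrightarrow> card (stair s i j) = length s + 1"
proof (induction s arbitrary: i j)
  case Nil then show ?case by simp
next
  case (Cons a s)
  then have ns: "nolr s" "a \<noteq> LR" by (auto simp: nolr_def)
  show ?case
  proof (cases a)
    case LM
    have "(i,j) \<notin> stair s (Suc i) j" using stair_bounds by fastforce
    then show ?thesis using Cons ns LM by (simp add: finite_stair)
  next
    case LN
    with Cons have j1: "1 \<le> j" by simp
    have "(i,j) \<notin> stair s i (j - 1)" using stair_bounds j1 by fastforce
    then show ?thesis using Cons ns LN by (simp add: finite_stair)
  next
    case LR with ns show ?thesis by simp
  qed
qed

lemma stair_inj: "nolr s \<Longrightarrow> nolr s' \<Longrightarrow> cN s \<le> j \<Longrightarrow> cN s' \<le> j \<Longrightarrow>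
   stair s i j = stair s' i j \<Longrightarrow> s = s'"
proof (induction s arbitrary: s' i j)
  case Nil
  show ?case
  proof (cases s')
    case Nil then show ?thesis by simp
  next
    case (Cons b u)
    have "b \<noteq> LR" using Cons Nil.prems by (auto simp: nolr_def)
    then show ?thesis using Nil.prems Cons stair_start[where s=u and i="Suc i" and j=j] stair_start[where s=u and i=i and j="j-1"]
      by (cases b) auto
  qed
next
  case (Cons a s)
  note IH = Cons.IH and prems = Cons.prems
  have a: "a \<noteq> LR" "nolr s" using prems by (auto simp: nolr_def)
  have nin1: "(i,j) \<notin> stair v (Suc i) j" for v using stair_bounds by fastforce
  have nin2: "1 \<le> j \<Longrightarrow> (i,j) \<notin> stair v i (j-1)" for v using stair_bounds by fastforce
  have eq: "insert (i,j) X = insert (i,j) Y \<Longrightarrow> (i,j) \<notin> X \<Longrightarrow> (i,j) \<notin> Y \<Longrightarrow> X = Y" for X Y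
    using insert_ident by metis
  obtain b u where s': "s' = [] \<or> s' = b # u" by (cases s') auto
  show ?case
  proof (cases "s' = []")
    case True
    then show ?thesis using prems a stair_start[where s=s and i="Suc i" and j=j] stair_start[where s=s and i=i and j="j-1"]
      by (cases a) auto
  next
    case False
    then have s'2: "s' = b # u" using s' by simp
    have b: "b \<noteq> LR" "nolr u" using prems s'2 by (auto simp: nolr_def)
    show ?thesis
    proof (cases a)
      case LM
      show ?thesis
      proof (cases b)
        case LM
        with \<open>a = LM\<close> prems s'2 have "stair s (Suc i) j = stair u (Suc i) j"
          using eq nin1 by auto
        then show ?thesis using IH[where s'=u and i="Suc i" and j=j] a b prems s'2 LM \<open>a = LM\<close> by auto
      next
        case LN
        have "(Suc i, j) \<in> stair s' i j" using prems stair_start[where s=s and i="Suc i" and j=j] \<open>a = LM\<close> by auto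
        moreover have "1 \<le> j" using prems s'2 LN by simp
        ultimately show ?thesis using LN s'2 stair_bounds[where x="Suc i" and y=j and s=u and i=i and j="j-1"] by auto
      next
        case LR with b show ?thesis by simp
      qed
    next
      case LN
      have j1: "1 \<le> j" using prems LN by simp
      show ?thesis
      proof (cases b)
        case LM
        have "(Suc i, j) \<in> stair (a#s) i j" using prems s'2 stair_start[where s=u and i="Suc i" and j=j] LM by auto
        then show ?thesis using LN j1 stair_bounds[where x="Suc i" and y=j and s=s and i=i and j="j-1"] by auto
      next
        case LN
        with \<open>a = LN\<close> prems s'2 j1 have "stair s i (j-1) = stair u i (j-1)"
          using eq nin2 by auto
        then show ?thesis using IH[where s'=u and i=i and j="j-1"] a b prems s'2 LN \<open>a = LN\<close> by auto
      next
        case LR with b show ?thesis by simp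
      qed
    next
      case LR with a show ?thesis by simp
    qed
  qed
qed


definition anti2 :: "(nat \<times> nat) set \<Rightarrow> bool" where
  "anti2 S \<longleftrightarrow> (\<forall>p\<in>S. \<forall>q\<in>S. \<not> (fst p < fst q \<and> snd p < snd q))"

lemma stair_ext_aux:
  "d = i1 - i0 + (j0 - j1) \<Longrightarrow> anti2 S \<Longrightarrow> (\<forall>(x,y)\<in>S. i0 \<le> x \<and> x \<le> i1 \<and> j1 \<le> y \<and> y \<le> j0) \<Longrightarrow>
   i0 \<le> i1 \<Longrightarrow> j1 \<le> j0 \<Longrightarrow>
   \<exists>s. nolr s \<and> cM s = i1 - i0 \<and> cN s = j0 - j1 \<and> S \<subseteq> stair s i0 j0"
proof (induction d arbitrary: i0 j0 S)
  case 0
  then have "S \<subseteq> {(i0,j0)}" by fastforce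
  then show ?case using 0 by (intro exI[of _ "[]"]) (auto simp: nolr_def)
next
  case (Suc d)
  show ?case
  proof (cases "j0 = j1 \<or> (\<exists>x. (x,j0) \<in> S \<and> i0 < x)")
    case True
    have lt: "i0 < i1"
    proof (rule ccontr)
      assume "\<not> i0 < i1"
      then have "i0 = i1" using Suc.prems by simp
      then show False using True Suc.prems by fastforce
    qed
    define S' where "S' = S - {(i0,j0)}"
    have a': "anti2 S'" using Suc.prems(2) by (auto simp: anti2_def S'_def)
    have b': "\<forall>(x,y)\<in>S'. Suc i0 \<le> x \<and> x \<le> i1 \<and> j1 \<le> y \<and> y \<le> j0"
    proof (intro ballI, clarify)
      fix x y assume xy: "(x,y) \<in> S'"
      then have xyS: "(x,y) \<in> S" and ne: "(x,y) \<noteq> (i0,j0)" by (auto simp: S'_def)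
      have bd: "i0 \<le> x \<and> x \<le> i1 \<and> j1 \<le> y \<and> y \<le> j0" using Suc.prems(3) xyS by blast
      have "x \<noteq> i0"
      proof
        assume x: "x = i0"
        then have y: "y < j0" using ne bd by auto
        show False
        proof (cases "j0 = j1")
          case True then show False using y bd by simp
        next
          case False
          then obtain x' where x': "(x',j0) \<in> S" "i0 < x'" using True by blast
          then show False using Suc.prems(2) xyS x y unfolding anti2_def by fastforce
        qed
      qed
      then show "Suc i0 \<le> x \<and> x \<le> i1 \<and> j1 \<le> y \<and> y \<le> j0" using bd by simp
    qed
    have "d = i1 - Suc i0 + (j0 - j1)" using Suc.prems lt by simp
    from Suc.IH[OF this a' b'] lt Suc.prems obtain s where
      s: "nolr s" "cM s = i1 - Suc i0" "cN s = j0 - j1" "S' \<subseteq> stair s (Suc i0) j0" by auto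
    show ?thesis
      using s lt by (intro exI[of _ "LM # s"]) (auto simp: nolr_def S'_def)
  next
    case False
    then have lt: "j1 < j0" using Suc.prems by simp
    define S' where "S' = S - {(i0,j0)}"
    have a': "anti2 S'" using Suc.prems(2) by (auto simp: anti2_def S'_def)
    have b': "\<forall>(x,y)\<in>S'. i0 \<le> x \<and> x \<le> i1 \<and> j1 \<le> y \<and> y \<le> j0 - 1"
    proof (intro ballI, clarify)
      fix x y assume xy: "(x,y) \<in> S'"
      then have xyS: "(x,y) \<in> S" and ne: "(x,y) \<noteq> (i0,j0)" by (auto simp: S'_def)
      have bd: "i0 \<le> x \<and> x \<le> i1 \<and> j1 \<le> y \<and> y \<le> j0" using Suc.prems(3) xyS by blast
      have "y \<noteq> j0"
      proof
        assume y: "y = j0"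
        then have "i0 < x" using ne bd by auto
        then show False using False xyS y by blast
      qed
      then show "i0 \<le> x \<and> x \<le> i1 \<and> j1 \<le> y \<and> y \<le> j0 - 1" using bd by linarith
    qed
    have "d = i1 - i0 + (j0 - 1 - j1)" using Suc.prems lt by simp
    moreover have "j1 \<le> j0 - 1" using lt by simp
    ultimately obtain s where
      s: "nolr s" "cM s = i1 - i0" "cN s = j0 - 1 - j1" "S' \<subseteq> stair s i0 (j0 - 1)"
      using Suc.IH[OF _ a' b'] Suc.prems by blast
    show ?thesis
      using s lt by (intro exI[of _ "LN # s"]) (auto simp: nolr_def S'_def)
  qed
qed

lemma stair_ext:
  "anti2 S \<Longrightarrow> (\<forall>(x,y)\<in>S. i0 \<le> x \<and> x \<le> i1 \<and> j1 \<le> y \<and> y \<le> j0) \<Longrightarrow>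
   i0 \<le> i1 \<Longrightarrow> j1 \<le> j0 \<Longrightarrow>
   \<exists>s. nolr s \<and> cM s = i1 - i0 \<and> cN s = j0 - j1 \<and> S \<subseteq> stair s i0 j0"
  using stair_ext_aux by blast


fun path :: "nat \<Rightarrow> nat \<Rightarrow> nat \<Rightarrow> letter list list \<Rightarrow> var set" where
  "path m n k [] = {}"
| "path m n k (s#ss) = (\<lambda>(i,j). (i,j,k)) ` stair s (m - cM s) n \<union> path (m - cM s) (n - cN s) (Suc k) ss"

abbreviation sM :: "letter list list \<Rightarrow> nat" where "sM ss \<equiv> sum_list (map cM ss)"
abbreviation sN :: "letter list list \<Rightarrow> nat" where "sN ss \<equiv> sum_list (map cN ss)"

lemma path_bounds:
  "sM ss < m \<Longrightarrow> sN ss < n \<Longrightarrow> (i,j,k') \<in> path m n k ss \<Longrightarrow>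
   1 \<le> i \<and> i \<le> m \<and> 1 \<le> j \<and> j \<le> n \<and> k \<le> k' \<and> k' < k + length ss"
proof (induction ss arbitrary: m n k)
  case Nil then show ?case by simp
next
  case (Cons s ss)
  show ?case
  proof (cases "(i,j,k') \<in> path (m - cM s) (n - cN s) (Suc k) ss")
    case True
    have "sM ss < m - cM s" "sN ss < n - cN s" using Cons.prems by auto
    from Cons.IH[OF this True] show ?thesis by auto
  next
    case False
    then have "(i,j) \<in> stair s (m - cM s) n" "k' = k" using Cons.prems by auto
    then show ?thesis using stair_bounds[of i j s "m - cM s" n] Cons.prems by auto
  qed
qed

lemma path_cliq: "sM ss < m \<Longrightarrow> sN ss < n \<Longrightarrow> cliq (path m n k ss)"
proof (induction ss arbitrary: m n k)
  case Nil then show ?case by (simp add: cliq_def)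
next
  case (Cons s ss)
  have h: "sM ss < m - cM s" "sN ss < n - cN s" using Cons.prems by auto
  note IH = Cons.IH[OF h, of "Suc k"]
  let ?B = "(\<lambda>(i,j). (i,j,k)) ` stair s (m - cM s) n"
  let ?R = "path (m - cM s) (n - cN s) (Suc k) ss"
  have BR: "\<not> Dg p q \<and> \<not> Dg q p" if p: "p \<in> ?B" and q: "q \<in> ?R" for p q
  proof -
    obtain x y where pxy: "p = (x,y,k)" "(x,y) \<in> stair s (m - cM s) n" using p by auto
    obtain x' y' k' where qxy: "q = (x',y',k')" by (cases q) auto
    have "x' \<le> m - cM s" "y' \<le> n - cN s" "Suc k \<le> k'"
      using path_bounds[OF h, of x' y' k' "Suc k"] q qxy by auto
    moreover have "m - cM s \<le> x" "n - cN s \<le> y" using stair_bounds[OF pxy(2)] by auto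
    ultimately show ?thesis using pxy qxy by (auto simp: Dg_simp)
  qed
  have BB: "\<not> Dg p q" if p: "p \<in> ?B" and q: "q \<in> ?B" for p q
  proof -
    obtain x y where pxy: "p = (x,y,k)" "(x,y) \<in> stair s (m - cM s) n" using p by auto
    obtain x' y' where qxy: "q = (x',y',k)" "(x',y') \<in> stair s (m - cM s) n" using q by auto
    show ?thesis using stair_anti[OF pxy(2) qxy(2)] pxy qxy by (auto simp: Dg_simp)
  qed
  show ?case unfolding cliq_def
  proof (intro ballI)
    fix p q assume "p \<in> path m n k (s # ss)" "q \<in> path m n k (s # ss)"
    then have "p \<in> ?B \<or> p \<in> ?R" "q \<in> ?B \<or> q \<in> ?R" by auto
    then show "\<not> Dg p q" using IH[unfolded cliq_def] BR BB by blast
  qed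
qed

lemma finite_path: "finite (path m n k ss)"
  by (induction ss arbitrary: m n k) (auto simp: finite_stair)

lemma card_path: "\<forall>s\<in>set ss. nolr s \<Longrightarrow> sM ss < m \<Longrightarrow> sN ss < n \<Longrightarrow>
  card (path m n k ss) = sum_list (map (\<lambda>s. length s + 1) ss)"
proof (induction ss arbitrary: m n k)
  case Nil then show ?case by simp
next
  case (Cons s ss)
  have h: "sM ss < m - cM s" "sN ss < n - cN s" using Cons.prems by auto
  let ?B = "(\<lambda>(i,j). (i,j,k)) ` stair s (m - cM s) n"
  let ?R = "path (m - cM s) (n - cN s) (Suc k) ss"
  have disj: "?B \<inter> ?R = {}"
  proof -
    have "Suc k \<le> k'" if "(x,y,k') \<in> ?R" for x y k' using path_bounds[OF h that] by simp
    then show ?thesis by fastforce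
  qed
  have inj: "inj_on (\<lambda>(i,j). (i,j,k)) X" for X :: "(nat \<times> nat) set" by (auto simp: inj_on_def)
  have "card ?B = length s + 1"
    using card_image[OF inj] card_stair[of s n "m - cM s"] Cons.prems by auto
  moreover have "card ?R = sum_list (map (\<lambda>s. length s + 1) ss)"
    using Cons.IH[OF _ h] Cons.prems by auto
  ultimately show ?case
    using card_Un_disjoint[OF _ _ disj] finite_path finite_stair by simp
qed

definition inbox :: "nat \<Rightarrow> nat \<Rightarrow> nat \<Rightarrow> nat \<Rightarrow> var set \<Rightarrow> bool" where
  "inbox m n k r F \<longleftrightarrow> (\<forall>(i,j,k')\<in>F. 1 \<le> i \<and> i \<le> m \<and> 1 \<le> j \<and> j \<le> n \<and> k \<le> k' \<and> k' < k + r)"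

lemma path_ext:
  "cliq F \<Longrightarrow> inbox m n k r F \<Longrightarrow> 1 \<le> m \<Longrightarrow> 1 \<le> n \<Longrightarrow> 1 \<le> r \<Longrightarrow>
   \<exists>ss. length ss = r \<and> (\<forall>s\<in>set ss. nolr s) \<and> sM ss = m - 1 \<and> sN ss = n - 1 \<and> F \<subseteq> path m n k ss"
proof (induction r arbitrary: m n k F)
  case 0 then show ?case by simp
next
  case (Suc r)
  define B where "B = {(i,j). (i,j,k) \<in> F}"
  define R where "R = {p \<in> F. snd (snd p) \<noteq> k}"
  have antiB: "anti2 B"
    using Suc.prems(1) unfolding anti2_def B_def cliq_def by (fastforce simp: Dg_simp)
  have Bbd: "\<forall>(x,y)\<in>B. 1 \<le> x \<and> x \<le> m \<and> 1 \<le> y \<and> y \<le> n"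
    using Suc.prems(2) unfolding B_def inbox_def by fastforce
  show ?case
  proof (cases "r = 0")
    case True
    have "\<forall>(x,y)\<in>B. 1 \<le> x \<and> x \<le> m \<and> 1 \<le> y \<and> y \<le> n" using Bbd by blast
    from stair_ext[OF antiB this] Suc.prems obtain s where
      s: "nolr s" "cM s = m - 1" "cN s = n - 1" "B \<subseteq> stair s 1 n" by auto
    have "F \<subseteq> path m n k [s]"
    proof
      fix p assume "p \<in> F"
      moreover obtain x y k' where p: "p = (x,y,k')" by (cases p) auto
      ultimately have "k \<le> k' \<and> k' < k + Suc r" using Suc.prems(2) unfolding inbox_def by blast
      then have "k' = k" using True by simp
      then have "(x,y) \<in> B" using \<open>p \<in> F\<close> p unfolding B_def by auto
      note this \<open>k' = k\<close>
      then show "p \<in> path m n k [s]" using s p Suc.prems by auto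
    qed
    then show ?thesis using s True by (intro exI[of _ "[s]"]) auto
  next
    case False
    define a where "a = Min (insert m (fst ` B))"
    define b where "b = Min (insert n (snd ` B))"
    have finB1: "finite (fst ` B)"
      by (rule finite_subset[of _ "{..m}"]) (use Bbd in auto)
    have finB2: "finite (snd ` B)"
      by (rule finite_subset[of _ "{..n}"]) (use Bbd in auto)
    have a3: "\<forall>(x,y)\<in>B. a \<le> x"
    proof clarify
      fix x y assume "(x,y) \<in> B"
      then have "x \<in> insert m (fst ` B)" by force
      then show "a \<le> x" unfolding a_def using finB1 by (simp add: Min_le)
    qed
    have b3: "\<forall>(x,y)\<in>B. b \<le> y"
    proof clarify
      fix x y assume "(x,y) \<in> B"
      then have "y \<in> insert n (snd ` B)" by force
      then show "b \<le> y" unfolding b_def using finB2 by (simp add: Min_le)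
    qed
    have a: "1 \<le> a" "a \<le> m" "\<forall>(x,y)\<in>B. a \<le> x"
      using Bbd Suc.prems finB1 a3 by (auto simp: a_def)
    have b: "1 \<le> b" "b \<le> n" "\<forall>(x,y)\<in>B. b \<le> y"
      using Bbd Suc.prems finB2 b3 by (auto simp: b_def)
    have Rbox: "inbox a b (Suc k) r R"
      unfolding inbox_def
    proof (clarify)
      fix i j k' assume q: "(i,j,k') \<in> R"
      then have qF: "(i,j,k') \<in> F" and kk: "k' \<noteq> k" by (auto simp: R_def)
      have bd: "1 \<le> i \<and> i \<le> m \<and> 1 \<le> j \<and> j \<le> n \<and> k \<le> k' \<and> k' < k + Suc r"
        using Suc.prems(2) qF unfolding inbox_def by blast
      have c: "i \<le> x \<and> j \<le> y" if "(x,y) \<in> B" for x y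
      proof -
        have "(x,y,k) \<in> F" using that by (auto simp: B_def)
        then have "\<not> Dg (x,y,k) (i,j,k')" using Suc.prems(1) qF unfolding cliq_def by blast
        then show ?thesis using bd kk by (auto simp: Dg_simp)
      qed
      have "i \<le> a" unfolding a_def using finB1 bd c by (auto simp: Min_ge_iff)
      moreover have "j \<le> b" unfolding b_def using finB2 bd c by (auto simp: Min_ge_iff)
      ultimately show "1 \<le> i \<and> i \<le> a \<and> 1 \<le> j \<and> j \<le> b \<and> Suc k \<le> k' \<and> k' < Suc k + r"
        using bd kk by auto
    qed
    have cR: "cliq R" using Suc.prems(1) unfolding cliq_def R_def by blast
    from Suc.IH[OF cR Rbox a(1) b(1)] False obtain ss where
      ss: "length ss = r" "\<forall>s\<in>set ss. nolr s" "sM ss = a - 1" "sN ss = b - 1" "R \<subseteq> path a b (Suc k) ss"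
      by auto
    have "\<forall>(x,y)\<in>B. a \<le> x \<and> x \<le> m \<and> b \<le> y \<and> y \<le> n" using a b Bbd by blast
    from stair_ext[OF antiB this a(2) b(2)] obtain s where
      s: "nolr s" "cM s = m - a" "cN s = n - b" "B \<subseteq> stair s a n" by auto
    have ma: "m - cM s = a" "n - cN s = b" using s a b by auto
    have "F \<subseteq> path m n k (s # ss)"
    proof
      fix p assume pF: "p \<in> F"
      obtain x y k' where p: "p = (x,y,k')" by (cases p) auto
      show "p \<in> path m n k (s # ss)"
      proof (cases "k' = k")
        case True
        then have "(x,y) \<in> B" using pF p by (auto simp: B_def)
        then show ?thesis using s(4) ma p True by auto
      next
        case False
        then have "p \<in> R" using pF p by (auto simp: R_def)
        then show ?thesis using ss(5) ma by auto
      qed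
    qed
    then show ?thesis using ss s a b
      by (intro exI[of _ "s # ss"]) auto
  qed
qed

lemma path_inj:
  "\<forall>s\<in>set ss. nolr s \<Longrightarrow> \<forall>s\<in>set ss'. nolr s \<Longrightarrow> sM ss < m \<Longrightarrow> sN ss < n \<Longrightarrow>
   sM ss' < m \<Longrightarrow> sN ss' < n \<Longrightarrow> length ss = length ss' \<Longrightarrow>
   path m n k ss = path m n k ss' \<Longrightarrow> ss = ss'"
proof (induction ss arbitrary: ss' m n k)
  case Nil then show ?case by simp
next
  case (Cons s ss)
  obtain s' ts where ss': "ss' = s' # ts" using Cons.prems by (cases ss') auto
  have h: "sM ss < m - cM s" "sN ss < n - cN s" using Cons.prems by auto
  have h': "sM ts < m - cM s'" "sN ts < n - cN s'" using Cons.prems ss' by auto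
  have blk: "{(i,j). (i,j,k) \<in> path m n k (t # us)} = stair t (m - cM t) n"
    if "sM us < m - cM t" "sN us < n - cN t" for t us
  proof -
    have "(i,j,k) \<notin> path (m - cM t) (n - cN t) (Suc k) us" for i j
      using path_bounds[OF that, of i j k "Suc k"] by auto
    then show ?thesis by auto
  qed
  have "{(i,j). (i,j,k) \<in> path m n k (s # ss)} = {(i,j). (i,j,k) \<in> path m n k (s' # ts)}"
    using Cons.prems(8) ss' by simp
  then have st: "stair s (m - cM s) n = stair s' (m - cM s') n"
    unfolding blk[OF h] blk[OF h'] .
  have cs: "cM s < m" "cN s < n" "cM s' < m" "cN s' < n" using Cons.prems ss' by auto
  have "(m - cM s, n) \<in> stair s' (m - cM s') n" using st stair_start by metis
  moreover have "(m - cM s', n) \<in> stair s (m - cM s) n" using st stair_start by metis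
  ultimately have eM: "cM s = cM s'" using stair_bounds[of "m - cM s" n s' "m - cM s'" n]
     stair_bounds[of "m - cM s'" n s "m - cM s" n] cs by linarith
  have "(m - cM s + cM s, n - cN s) \<in> stair s' (m - cM s') n"
    using st stair_end[of s "m - cM s" n] Cons.prems by auto
  moreover have "(m - cM s' + cM s', n - cN s') \<in> stair s (m - cM s) n"
    using st stair_end[of s' "m - cM s'" n] Cons.prems ss' by auto
  ultimately have eN: "cN s = cN s'" using stair_bounds[of "m - cM s + cM s" "n - cN s" s' "m - cM s'" n]
     stair_bounds[of "m - cM s' + cM s'" "n - cN s'" s "m - cM s" n] cs by linarith
  have "s = s'"
    using stair_inj[of s s' n "m - cM s"] st eM cs Cons.prems ss' by auto
  have rest: "path (m - cM s) (n - cN s) (Suc k) X = {p \<in> path m n k (s # X). snd (snd p) \<noteq> k}"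
    if "sM X < m - cM s" "sN X < n - cN s" for X
  proof -
    have "(i,j,k) \<notin> path (m - cM s) (n - cN s) (Suc k) X" for i j
      using path_bounds[OF that, of i j k "Suc k"] by auto
    then show ?thesis by auto
  qed
  have h'': "sM ts < m - cM s" "sN ts < n - cN s" using h' \<open>s = s'\<close> by auto
  have "{p \<in> path m n k (s # ss). snd (snd p) \<noteq> k} = {p \<in> path m n k (s # ts). snd (snd p) \<noteq> k}"
    using Cons.prems(8) ss' \<open>s = s'\<close> by simp
  then have "path (m - cM s) (n - cN s) (Suc k) ss = path (m - cM s) (n - cN s) (Suc k) ts"
    unfolding rest[OF h] rest[OF h''] .
  then have "ss = ts"
    using Cons.IH[OF _ _ h _ _ _ , of ts] Cons.prems h' ss' eM eN by auto
  then show ?case using ss' \<open>s = s'\<close> by simp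
qed


definition segs :: "nat \<Rightarrow> nat \<Rightarrow> nat \<Rightarrow> letter list list set" where
  "segs m n r = {ss. length ss = r \<and> (\<forall>s\<in>set ss. nolr s) \<and> sM ss = m - 1 \<and> sN ss = n - 1}"

fun join :: "letter list list \<Rightarrow> letter list" where
  "join [] = []"
| "join [s] = s"
| "join (s # t # ss) = s @ LR # join (t # ss)"

fun spl :: "letter list \<Rightarrow> letter list list" where
  "spl [] = [[]]"
| "spl (x#w) = (if x = LR then [] # spl w else (case spl w of [] \<Rightarrow> [[x]] | s#ss \<Rightarrow> (x#s)#ss))"

lemma join_cons: "join ((x#s)#ss) = x # join (s#ss)"
  by (cases ss) auto

lemma count_join: "y \<noteq> LR \<Longrightarrow> count_list (join ss) y = sum_list (map (\<lambda>s. count_list s y) ss)"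
  by (induction ss rule: join.induct) auto

lemma count_join_LR: "\<forall>s\<in>set ss. nolr s \<Longrightarrow> ss \<noteq> [] \<Longrightarrow> count_list (join ss) LR = length ss - 1"
proof (induction ss rule: join.induct)
  case (2 s) then show ?case by (simp add: nolr_def count_list_0_iff)
next
  case (3 s t ss) then show ?case by (simp add: nolr_def count_list_0_iff)
qed simp

lemma spl_props: "spl w \<noteq> [] \<and> join (spl w) = w \<and> (\<forall>s\<in>set (spl w). nolr s) \<and>
  length (spl w) = count_list w LR + 1 \<and> sM (spl w) = count_list w LM \<and> sN (spl w) = count_list w LN"
proof (induction w)
  case Nil then show ?case by (simp add: nolr_def)
next
  case (Cons x w)
  show ?case
  proof (cases "x = LR")
    case True then show ?thesis using Cons by (cases "spl w") (auto simp: nolr_def)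
  next
    case False
    then obtain s ss where e: "spl w = s # ss" using Cons by (cases "spl w") auto
    then show ?thesis using Cons False
      by (cases x) (auto simp: nolr_def join_cons)
  qed
qed

lemma append_LR: "LR \<notin> set s \<Longrightarrow> LR \<notin> set s' \<Longrightarrow> s @ LR # x = s' @ LR # y \<Longrightarrow> s = s' \<and> x = y"
proof (induction s arbitrary: s')
  case Nil then show ?case by (cases s') auto
next
  case (Cons a s) then show ?case by (cases s') auto
qed

lemma join_inj: "\<forall>s\<in>set ss. nolr s \<Longrightarrow> \<forall>s\<in>set ss'. nolr s \<Longrightarrow> length ss = length ss' \<Longrightarrow>
  join ss = join ss' \<Longrightarrow> ss = ss'"
proof (induction ss arbitrary: ss' rule: join.induct)
  case 1 then show ?case by simp
next
  case (2 s) then show ?case by (cases ss' rule: join.cases) auto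
next
  case (3 s t ss)
  then obtain s' t' us where e: "ss' = s' # t' # us" by (cases ss' rule: join.cases) auto
  then have "s = s' \<and> join (t # ss) = join (t' # us)"
    using 3 append_LR[of s s'] by (auto simp: nolr_def)
  then show ?case using 3 e 3(1)[of "t' # us"] by (auto simp: nolr_def)
qed

lemma bij_join: "1 \<le> r \<Longrightarrow> bij_betw join (segs m n r) (words m n r)"
proof -
  assume r: "1 \<le> r"
  have "inj_on join (segs m n r)"
    by (rule inj_onI) (auto simp: segs_def intro: join_inj)
  moreover have "join ` segs m n r \<subseteq> words m n r"
  proof
    fix w assume "w \<in> join ` segs m n r"
    then obtain ss where ss: "ss \<in> segs m n r" "w = join ss" by auto
    then have "ss \<noteq> []" using r by (auto simp: segs_def)
    then show "w \<in> words m n r" using ss count_join[of LM ss] count_join[of LN ss] count_join_LR[of ss]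
      by (auto simp: segs_def words_def)
  qed
  moreover have "words m n r \<subseteq> join ` segs m n r"
  proof
    fix w assume w: "w \<in> words m n r"
    have "spl w \<in> segs m n r" using spl_props[of w] w r by (auto simp: segs_def words_def)
    then show "w \<in> join ` segs m n r" using spl_props[of w] by force
  qed
  ultimately show ?thesis by (auto simp: bij_betw_def)
qed

lemma length_nolr: "nolr s \<Longrightarrow> length s = cM s + cN s"
proof (induction s)
  case (Cons a s) then show ?case by (cases a) (auto simp: nolr_def)
qed simp

lemma card_path_segs: "ss \<in> segs m n r \<Longrightarrow> 1 \<le> m \<Longrightarrow> 1 \<le> n \<Longrightarrow>
   card (path m n k ss) = (m - 1) + (n - 1) + r"
proof -
  assume ss: "ss \<in> segs m n r" and mn: "1 \<le> m" "1 \<le> n"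
  have "card (path m n k ss) = sum_list (map (\<lambda>s. length s + 1) ss)"
    using card_path ss mn by (auto simp: segs_def)
  also have "\<dots> = sum_list (map (\<lambda>s. cM s + cN s + 1) ss)"
    using ss by (intro arg_cong[where f=sum_list] map_cong) (auto simp: segs_def length_nolr)
  also have "\<dots> = sM ss + sN ss + length ss"
    by (induction ss) auto
  finally show ?thesis using ss by (auto simp: segs_def)
qed

lemma varset_inbox: "F \<subseteq> varset m n r \<longleftrightarrow> inbox m n 1 r F"
  by (auto simp: varset_def inbox_def)

definition CL :: "nat \<Rightarrow> nat \<Rightarrow> nat \<Rightarrow> var set set" where
  "CL m n r = {F. F \<subseteq> varset m n r \<and> cliq F}"

lemma path_in_CL: "ss \<in> segs m n r \<Longrightarrow> 1 \<le> m \<Longrightarrow> 1 \<le> n \<Longrightarrow> path m n 1 ss \<in> CL m n r"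
proof -
  assume ss: "ss \<in> segs m n r" and mn: "1 \<le> m" "1 \<le> n"
  have h: "sM ss < m" "sN ss < n" using ss mn by (auto simp: segs_def)
  have "path m n 1 ss \<subseteq> varset m n r"
    unfolding varset_inbox inbox_def using path_bounds[OF h] ss by (fastforce simp: segs_def)
  then show ?thesis using path_cliq[OF h] by (simp add: CL_def)
qed

lemma facets_CL: "1 \<le> m \<Longrightarrow> 1 \<le> n \<Longrightarrow> 1 \<le> r \<Longrightarrow> bij_betw (path m n 1) (segs m n r) (facets (CL m n r))"
proof -
  assume mn: "1 \<le> m" "1 \<le> n" "1 \<le> r"
  have ext: "\<exists>ss\<in>segs m n r. F \<subseteq> path m n 1 ss" if "F \<in> CL m n r" for F
  proof -
    have "cliq F" "inbox m n 1 r F" using that by (auto simp: CL_def varset_inbox)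
    from path_ext[OF this mn] show ?thesis by (auto simp: segs_def)
  qed
  have inj: "inj_on (path m n 1) (segs m n r)"
  proof (rule inj_onI)
    fix ss ss' assume "ss \<in> segs m n r" "ss' \<in> segs m n r" "path m n 1 ss = path m n 1 ss'"
    then show "ss = ss'" using path_inj[of ss ss' m n 1] mn by (auto simp: segs_def)
  qed
  have sub1: "path m n 1 ` segs m n r \<subseteq> facets (CL m n r)"
  proof
    fix F assume "F \<in> path m n 1 ` segs m n r"
    then obtain ss where ss: "ss \<in> segs m n r" "F = path m n 1 ss" by auto
    have "G = F" if G: "G \<in> CL m n r" "F \<subseteq> G" for G
    proof -
      obtain ss' where ss': "ss' \<in> segs m n r" "G \<subseteq> path m n 1 ss'" using ext[OF G(1)] by auto
      have "F \<subseteq> path m n 1 ss'" using G ss' by auto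
      moreover have "card F = card (path m n 1 ss')"
        using card_path_segs[OF ss(1) mn(1,2)] card_path_segs[OF ss'(1) mn(1,2)] ss by simp
      ultimately have "F = path m n 1 ss'" using card_subset_eq[OF finite_path] by metis
      then show "G = F" using G ss' by auto
    qed
    then show "F \<in> facets (CL m n r)"
      using path_in_CL[OF ss(1) mn(1,2)] ss by (auto simp: facets_def)
  qed
  have sub2: "facets (CL m n r) \<subseteq> path m n 1 ` segs m n r"
  proof
    fix F assume F: "F \<in> facets (CL m n r)"
    then have FC: "F \<in> CL m n r" by (simp add: facets_def)
    obtain ss where ss: "ss \<in> segs m n r" "F \<subseteq> path m n 1 ss" using ext[OF FC] by auto
    have "path m n 1 ss = F" using F ss path_in_CL[OF ss(1) mn(1,2)] by (auto simp: facets_def)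
    then show "F \<in> path m n 1 ` segs m n r" using ss by auto
  qed
  show ?thesis using inj sub1 sub2 by (auto simp: bij_betw_def)
qed

lemma comb_main: "1 \<le> m \<Longrightarrow> 1 \<le> n \<Longrightarrow> 1 \<le> r \<Longrightarrow> \<exists>f. bij_betw f (facets (CL m n r)) (words m n r)"
proof -
  assume mn: "1 \<le> m" "1 \<le> n" "1 \<le> r"
  have "bij_betw (inv_into (segs m n r) (path m n 1)) (facets (CL m n r)) (segs m n r)"
    using bij_betw_inv_into[OF facets_CL[OF mn]] .
  from bij_betw_trans[OF this bij_join[OF mn(3)]] show ?thesis by blast
qed



abbreviation cI :: "var \<Rightarrow> nat" where "cI p \<equiv> fst p"
abbreviation cJ :: "var \<Rightarrow> nat" where "cJ p \<equiv> fst (snd p)"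
abbreviation cK :: "var \<Rightarrow> nat" where "cK p \<equiv> snd (snd p)"

lemma Dg_proj: "Dg p q \<longleftrightarrow> (cI p < cI q \<and> (cK p < cK q \<or> cK p = cK q \<and> cJ p < cJ q)) \<or>
   ((cK p < cK q \<or> cK p = cK q \<and> cI p < cI q) \<and> cJ p < cJ q)"
  by (cases p; cases q) (simp add: Dg_simp)

lemma cl_lt: "\<not> Dg p q \<Longrightarrow> cK p < cK q \<Longrightarrow> cI q \<le> cI p \<and> cJ q \<le> cJ p"
  by (auto simp: Dg_proj)

lemma cl_eq: "\<not> Dg p q \<Longrightarrow> cK p = cK q \<Longrightarrow> \<not> (cI p < cI q \<and> cJ p < cJ q)"
  by (auto simp: Dg_proj)

definition ekey :: "var multiset \<Rightarrow> var" where
  "ekey A = (let K = image_mset cK A; kmax = Max (set_mset K);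
              c = size (filter_mset (\<lambda>k. k = kmax) K);
              ist = (LEAST x. c \<le> size (filter_mset (\<lambda>i. i \<le> x) (image_mset cI A)));
              jmin = Min (set_mset (image_mset cJ A))
          in (ist, jmin, kmax))"

lemma ekey_in:
  assumes cl: "cliq (set_mset A)" and ne: "A \<noteq> {#}"
  shows "ekey A \<in># A"
proof -
  define kmax where "kmax = Max (set_mset (image_mset cK A))"
  define LB where "LB = filter_mset (\<lambda>p. cK p = kmax) A"
  have km: "kmax \<in> cK ` set_mset A" unfolding kmax_def using ne by (simp add: Max_in)
  have kmax_ge: "cK p \<le> kmax" if "p \<in># A" for p unfolding kmax_def using that by simp
  have LBne: "LB \<noteq> {#}" using km by (auto simp: LB_def filter_mset_eq_mempty_iff) blast
  define imax where "imax = Max (cI ` set_mset LB)"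
  have im: "imax \<in> cI ` set_mset LB" unfolding imax_def using LBne by (simp add: Max_in)
  then obtain e0 where e0: "e0 \<in># LB" "cI e0 = imax" by auto
  have imax_ge: "cI p \<le> imax" if "p \<in># LB" for p unfolding imax_def using that by simp
  have cdef: "size (filter_mset (\<lambda>k. k = kmax) (image_mset cK A)) = size LB"
    by (simp add: filter_mset_image_mset LB_def)
  have sz: "size (filter_mset (\<lambda>i. i \<le> x) (image_mset cI A)) = size (filter_mset (\<lambda>p. cI p \<le> x) A)" for x
    by (simp add: filter_mset_image_mset)
  have ist: "(LEAST x. size LB \<le> size (filter_mset (\<lambda>p. cI p \<le> x) A)) = imax"
  proof (rule Least_equality)
    have "LB \<subseteq># filter_mset (\<lambda>p. cI p \<le> imax) A"
      unfolding LB_def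
    proof (rule filter_mset_mono_strong[OF subset_mset.refl])
      fix p assume "p \<in># A" "cK p = kmax"
      then have "p \<in># LB" by (simp add: LB_def)
      then show "cI p \<le> imax" by (rule imax_ge)
    qed
    then show "size LB \<le> size (filter_mset (\<lambda>p. cI p \<le> imax) A)" by (rule size_mset_mono)
  next
    fix y assume y: "size LB \<le> size (filter_mset (\<lambda>p. cI p \<le> y) A)"
    show "imax \<le> y"
    proof (rule ccontr)
      assume "\<not> imax \<le> y"
      then have yl: "y < imax" by simp
      have "filter_mset (\<lambda>p. cI p \<le> y) A \<subseteq># filter_mset (\<lambda>p. cI p \<noteq> imax) LB"
        unfolding LB_def filter_filter_mset
      proof (rule filter_mset_mono_strong[OF subset_mset.refl])
        fix p assume p: "p \<in># A" "cI p \<le> y"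
        have "cK p = kmax"
        proof (rule ccontr)
          assume "cK p \<noteq> kmax"
          moreover have "cK e0 = kmax" using e0(1) by (simp add: LB_def)
          ultimately have lt: "cK p < cK e0" using kmax_ge[OF p(1)] by simp
          have "e0 \<in># A" using e0 by (simp add: LB_def)
          then have "\<not> Dg p e0" using cl p(1) unfolding cliq_def by blast
          from cl_lt[OF this lt] have "cI e0 \<le> cI p" by simp
          then show False using e0 p yl by simp
        qed
        then show "cK p = kmax \<and> cI p \<noteq> imax" using p yl by simp
      qed
      then have "size (filter_mset (\<lambda>p. cI p \<le> y) A) \<le> size (filter_mset (\<lambda>p. cI p \<noteq> imax) LB)"
        by (rule size_mset_mono)
      moreover have "size (filter_mset (\<lambda>p. cI p \<noteq> imax) LB) < size LB"
      proof -
        have "LB = filter_mset (\<lambda>p. cI p = imax) LB + filter_mset (\<lambda>p. \<not> cI p = imax) LB"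
          by (rule multiset_partition)
        then have "size LB = size (filter_mset (\<lambda>p. cI p = imax) LB + filter_mset (\<lambda>p. \<not> cI p = imax) LB)"
          by (rule arg_cong)
        then have "size LB = size (filter_mset (\<lambda>p. cI p = imax) LB) + size (filter_mset (\<lambda>p. cI p \<noteq> imax) LB)"
          by (simp only: size_union)
        moreover have "e0 \<in># filter_mset (\<lambda>p. cI p = imax) LB"
          using e0 unfolding set_mset_filter by blast
        then have "filter_mset (\<lambda>p. cI p = imax) LB \<noteq> {#}" by (metis empty_iff set_mset_empty)
        moreover have "0 < size (filter_mset (\<lambda>p. cI p = imax) LB)"
          using \<open>filter_mset (\<lambda>p. cI p = imax) LB \<noteq> {#}\<close> by (rule iffD1[OF nonempty_has_size])
        ultimately show ?thesis by linarith
      qed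
      ultimately show False using y by simp
    qed
  qed
  define E where "E = filter_mset (\<lambda>p. cI p = imax) LB"
  have "e0 \<in># E" unfolding E_def using e0 unfolding set_mset_filter by blast
  then have Ene: "E \<noteq> {#}" by (metis empty_iff set_mset_empty)
  define jm where "jm = Min (cJ ` set_mset E)"
  have "jm \<in> cJ ` set_mset E" unfolding jm_def using Ene by (simp add: Min_in)
  then obtain e where e: "e \<in># E" "cJ e = jm" by auto
  have jm_le: "jm \<le> cJ p" if "p \<in># E" for p unfolding jm_def using that by simp
  have eA: "e \<in># A" and ek: "cK e = kmax" and ei: "cI e = imax" using e by (auto simp: E_def LB_def)
  have jmin: "Min (set_mset (image_mset cJ A)) = jm"
  proof (rule Min_eqI)
    show "jm \<in> set_mset (image_mset cJ A)" using eA e by auto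
  next
    fix y assume "y \<in> set_mset (image_mset cJ A)"
    then obtain q where q: "q \<in># A" "y = cJ q" by auto
    have nd: "\<not> Dg q e" using cl q eA unfolding cliq_def by blast
    show "jm \<le> y"
    proof (cases "cK q < kmax")
      case True then show ?thesis using cl_lt[OF nd(1)] ek e q by simp
    next
      case False
      then have qk: "cK q = kmax" using kmax_ge[OF q(1)] by simp
      then have qLB: "q \<in># LB" using q by (simp add: LB_def)
      show ?thesis
      proof (cases "cI q = imax")
        case True
        then have "q \<in># E" using qLB by (simp add: E_def)
        then show ?thesis using jm_le q by simp
      next
        case False
        then have "cI q < cI e" using imax_ge[OF qLB] ei by simp
        then show ?thesis using cl_eq[OF nd(1)] qk ek e q by auto
      qed
    qed
  qed simp
  have "ekey A = (imax, jm, kmax)"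
    unfolding ekey_def Let_def kmax_def[symmetric] cdef sz ist jmin ..
  also have "\<dots> = e" using ek ei e(2) by (simp add: prod_eq_iff)
  finally show ?thesis using eA by simp
qed

lemma ekey_cong: "image_mset cI A = image_mset cI B \<Longrightarrow> image_mset cJ A = image_mset cJ B \<Longrightarrow>
  image_mset cK A = image_mset cK B \<Longrightarrow> ekey A = ekey B"
  unfolding ekey_def by simp

lemma uniq_clique:
  "cliq (set_mset A) \<Longrightarrow> cliq (set_mset B) \<Longrightarrow> image_mset cI A = image_mset cI B \<Longrightarrow>
   image_mset cJ A = image_mset cJ B \<Longrightarrow> image_mset cK A = image_mset cK B \<Longrightarrow> A = B"
proof (induction "size A" arbitrary: A B rule: less_induct)
  case less
  show ?case
  proof (cases "A = {#}")
    case True then show ?thesis using less.prems(3) by simp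
  next
    case False
    then have Bne: "B \<noteq> {#}" using less.prems(3) by auto
    define e where "e = ekey A"
    have eA: "e \<in># A" using ekey_in[OF less.prems(1) False] e_def by simp
    have eB: "e \<in># B" using ekey_in[OF less.prems(2) Bne] ekey_cong[OF less.prems(3-5)] e_def by simp
    have c1: "cliq (set_mset (A - {#e#}))" "cliq (set_mset (B - {#e#}))"
      using less.prems(1,2) unfolding cliq_def by (meson in_diffD)+
    have im: "image_mset f (A - {#e#}) = image_mset f (B - {#e#})" if "image_mset f A = image_mset f B" for f :: "var \<Rightarrow> nat"
      using that eA eB by (simp add: image_mset_Diff)
    have "size (A - {#e#}) < size A" using eA by (metis size_Diff1_less)
    then have "A - {#e#} = B - {#e#}"
      by (rule less.hyps[OF _ c1 im[OF less.prems(3)] im[OF less.prems(4)] im[OF less.prems(5)]])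
    then show ?thesis using eA eB by (metis insert_DiffM)
  qed
qed



lemma to_refl: "term_order le \<Longrightarrow> le s s" unfolding term_order_def by blast
lemma to_antisym: "term_order le \<Longrightarrow> le s t \<Longrightarrow> le t s \<Longrightarrow> s = t" unfolding term_order_def by blast
lemma to_trans: "term_order le \<Longrightarrow> le s t \<Longrightarrow> le t u \<Longrightarrow> le s u" unfolding term_order_def by blast
lemma to_total: "term_order le \<Longrightarrow> le s t \<or> le t s" unfolding term_order_def by blast
lemma to_mono: "term_order le \<Longrightarrow> le s t \<Longrightarrow> le (s + u) (t + u)" unfolding term_order_def by blast
lemma to_wf: "term_order le \<Longrightarrow> wfP (\<lambda>s t. le s t \<and> s \<noteq> t)" unfolding term_order_def by blast

lemma max_exists: "finite A \<Longrightarrow> A \<noteq> {} \<Longrightarrow> term_order le \<Longrightarrow> \<exists>t\<in>A. \<forall>s\<in>A. le s t"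
proof (induction A rule: finite_ne_induct)
  case (singleton x) then show ?case by (auto intro: to_refl)
next
  case (insert x A)
  then obtain t where t: "t \<in> A" "\<forall>s\<in>A. le s t" by auto
  show ?case
  proof (cases "le x t")
    case True then show ?thesis using t by auto
  next
    case False
    then have "le t x" using to_total[OF insert.prems] by blast
    then show ?thesis using t to_trans[OF insert.prems] to_refl[OF insert.prems] by blast
  qed
qed

lemma lead_mon_prop:
  assumes to: "term_order le" and f: "f \<noteq> 0"
  shows "lead_mon le f \<in> Poly_Mapping.keys f \<and> (\<forall>s\<in>Poly_Mapping.keys f. le s (lead_mon le f))"
proof -
  have "Poly_Mapping.keys f \<noteq> {}" using f by simp
  then obtain t where t: "t \<in> Poly_Mapping.keys f" "\<forall>s\<in>Poly_Mapping.keys f. le s t"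
    using max_exists[OF finite_keys _ to] by blast
  have "lead_mon le f = t" unfolding lead_mon_def
  proof (rule the_equality)
    show "t \<in> Poly_Mapping.keys f \<and> (\<forall>s\<in>Poly_Mapping.keys f. le s t)" using t by blast
  next
    fix t' assume "t' \<in> Poly_Mapping.keys f \<and> (\<forall>s\<in>Poly_Mapping.keys f. le s t')"
    then show "t' = t" using t to_antisym[OF to] by blast
  qed
  then show ?thesis using t by simp
qed

lemma lead_mon_keys: "Poly_Mapping.keys f = Poly_Mapping.keys g \<Longrightarrow> lead_mon le f = lead_mon le g"
  unfolding lead_mon_def by simp

lemma keys_binom:
  assumes "D \<noteq> A"
  shows "Poly_Mapping.keys (Poly_Mapping.single D 1 - Poly_Mapping.single A (1::'a::field)) = {D, A}"
proof -
  have "Poly_Mapping.lookup (Poly_Mapping.single D 1 - Poly_Mapping.single A (1::'a)) t =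
        (if t = D then 1 else if t = A then -1 else 0)" for t
    using assms by (auto simp: lookup_minus lookup_single when_def)
  then show ?thesis by (auto simp: in_keys_iff split: if_splits)
qed

section \<open>Monomials as multisets\<close>

definition ms :: "mon \<Rightarrow> var multiset" where
  "ms t = Abs_multiset (Poly_Mapping.lookup t)"

lemma count_ms: "count (ms t) = Poly_Mapping.lookup t"
proof -
  have "finite {x. 0 < Poly_Mapping.lookup t x}"
    using finite_keys[of t] by (simp add: in_keys_iff[symmetric] Collect_mem_eq)
  then show ?thesis unfolding ms_def by simp
qed

lemma ms_add: "ms (s + t) = ms s + ms t"
  by (rule multiset_eqI) (simp add: count_ms lookup_add)

lemma ms_inj: "ms s = ms t \<Longrightarrow> s = t"
  by (metis count_ms poly_mapping_eqI)

lemma set_ms: "set_mset (ms t) = Poly_Mapping.keys t"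
  by (auto simp: set_mset_def count_ms in_keys_iff)

lemma ms_var: "ms (var_mon v) = {#v#}"
  by (rule multiset_eqI) (simp add: count_ms var_mon_def lookup_single when_def)

definition mgs :: "mon \<Rightarrow> nat multiset \<times> nat multiset \<times> nat multiset" where
  "mgs t = (image_mset cI (ms t), image_mset cJ (ms t), image_mset cK (ms t))"

lemma mgs_add_cong: "mgs s = mgs s' \<Longrightarrow> mgs (s + t) = mgs (s' + t)"
  by (simp add: mgs_def ms_add)

lemma keys_add_mon: "Poly_Mapping.keys ((s::mon) + t) = Poly_Mapping.keys s \<union> Poly_Mapping.keys t"
  by (auto simp: in_keys_iff lookup_add)

section \<open>A linear functional\<close>

definition lam :: "(mon \<Rightarrow> bool) \<Rightarrow> 'a::comm_ring_1 mpoly \<Rightarrow> 'a" where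
  "lam C f = (\<Sum>t\<in>Poly_Mapping.keys f. if C t then Poly_Mapping.lookup f t else 0)"

lemma lam_superset: "finite S \<Longrightarrow> Poly_Mapping.keys f \<subseteq> S \<Longrightarrow>
   lam C f = (\<Sum>t\<in>S. if C t then Poly_Mapping.lookup f t else 0)"
  unfolding lam_def by (rule sum.mono_neutral_left) (auto simp: in_keys_iff)

lemma lam_add: "lam C (f + g) = lam C f + lam C g"
proof -
  let ?S = "Poly_Mapping.keys f \<union> Poly_Mapping.keys g"
  have "Poly_Mapping.keys (f + g) \<subseteq> ?S" by (rule keys_add)
  then have "lam C (f + g) = (\<Sum>t\<in>?S. if C t then Poly_Mapping.lookup (f + g) t else 0)"
    by (intro lam_superset) auto
  also have "\<dots> = (\<Sum>t\<in>?S. if C t then Poly_Mapping.lookup f t else 0) + (\<Sum>t\<in>?S. if C t then Poly_Mapping.lookup g t else 0)"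
    by (simp only: sum.distrib[symmetric]) (rule sum.cong, auto simp: lookup_add)
  also have "\<dots> = lam C f + lam C g"
    by (simp add: lam_superset[symmetric])
  finally show ?thesis .
qed

lemma lam_zero: "lam C 0 = 0" by (simp add: lam_def)

lemma lam_minus: "lam C (f - g) = lam C f - lam C (g :: 'a::comm_ring_1 mpoly)"
  using lam_add[of C "f - g" g] by (simp add: algebra_simps)

lemma lam_sum: "finite I \<Longrightarrow> lam C (\<Sum>i\<in>I. g i) = (\<Sum>i\<in>I. lam C (g i))"
  by (induction I rule: finite_induct) (auto simp: lam_zero lam_add)

lemma lam_single: "lam C (Poly_Mapping.single t a) = (if C t then a else 0)"
  by (simp add: lam_def)

lemma poly_expand: "(f :: 'a::comm_ring_1 mpoly) = (\<Sum>t\<in>Poly_Mapping.keys f. Poly_Mapping.single t (Poly_Mapping.lookup f t))"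
proof (rule poly_mapping_eqI)
  fix k
  have "Poly_Mapping.lookup (\<Sum>t\<in>Poly_Mapping.keys f. Poly_Mapping.single t (Poly_Mapping.lookup f t)) k
      = (\<Sum>t\<in>Poly_Mapping.keys f. if t = k then Poly_Mapping.lookup f t else 0)"
    by (simp add: lookup_sum lookup_single when_def)
  also have "\<dots> = Poly_Mapping.lookup f k"
    by (simp add: sum.delta' in_keys_iff)
  finally show "Poly_Mapping.lookup f k = Poly_Mapping.lookup (\<Sum>t\<in>Poly_Mapping.keys f. Poly_Mapping.single t (Poly_Mapping.lookup f t)) k" ..
qed

lemma lam_single_mult: "lam C (Poly_Mapping.single s a * f) = a * lam (\<lambda>t. C (s + t)) (f :: 'a::comm_ring_1 mpoly)"
proof -
  have "Poly_Mapping.single s a * f = Poly_Mapping.single s a * (\<Sum>t\<in>Poly_Mapping.keys f. Poly_Mapping.single t (Poly_Mapping.lookup f t))"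
    by (rule arg_cong[OF poly_expand])
  also have "\<dots> = (\<Sum>t\<in>Poly_Mapping.keys f. Poly_Mapping.single s a * Poly_Mapping.single t (Poly_Mapping.lookup f t))"
    by (simp only: sum_distrib_left)
  also have "\<dots> = (\<Sum>t\<in>Poly_Mapping.keys f. Poly_Mapping.single (s + t) (a * Poly_Mapping.lookup f t))"
    by (simp only: mult_single)
  finally have "lam C (Poly_Mapping.single s a * f) = (\<Sum>t\<in>Poly_Mapping.keys f. lam C (Poly_Mapping.single (s + t) (a * Poly_Mapping.lookup f t)))"
    by (simp only: lam_sum finite_keys)
  also have "\<dots> = (\<Sum>t\<in>Poly_Mapping.keys f. if C (s + t) then a * Poly_Mapping.lookup f t else 0)"
    by (simp only: lam_single)
  also have "\<dots> = a * lam (\<lambda>t. C (s + t)) f"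
    unfolding lam_def sum_distrib_left by (rule sum.cong) auto
  finally show ?thesis .
qed


definition okm :: "nat \<Rightarrow> nat \<Rightarrow> nat \<Rightarrow> mon \<Rightarrow> bool" where
  "okm m n r t \<longleftrightarrow> Poly_Mapping.keys t \<subseteq> varset m n r"

definition isminor :: "nat \<Rightarrow> nat \<Rightarrow> nat \<Rightarrow> (nat \<Rightarrow> nat \<Rightarrow> var) \<Rightarrow> nat \<Rightarrow> nat \<Rightarrow> nat \<Rightarrow> nat \<Rightarrow> bool" where
  "isminor m n r X a b c d \<longleftrightarrow> (X = Hmat m n r \<and> (a,b,c,d) \<in> minor_idx m (n*r)) \<or>
                                (X = Vmat m n r \<and> (a,b,c,d) \<in> minor_idx (m*r) n)"

lemma mgs_pair: "mgs (var_mon x + var_mon y) = ({#cI x, cI y#}, {#cJ x, cJ y#}, {#cK x, cK y#})"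
  by (simp add: mgs_def ms_add ms_var)

lemma blk_eq: "1 \<le> (j::nat) \<Longrightarrow> j \<le> n \<Longrightarrow> 1 \<le> k \<Longrightarrow>
   ((k - 1) * n + j - 1) mod n = j - 1 \<and> ((k - 1) * n + j - 1) div n = k - 1"
proof -
  assume a: "1 \<le> j" "j \<le> n" "1 \<le> k"
  have "(k - 1) * n + j - 1 = (k - 1) * n + (j - 1)" using a by simp
  also have "\<dots> = (j - 1) + n * (k - 1)" by (simp add: mult.commute)
  finally have e: "(k - 1) * n + j - 1 = (j - 1) + n * (k - 1)" .
  have n0: "0 < n" using a by simp
  have "(j - 1) mod n = j - 1" "(j - 1) div n = 0" using a by auto
  then show ?thesis unfolding e using n0 by simp
qed

lemma Hmat_eq: "1 \<le> j \<Longrightarrow> j \<le> n \<Longrightarrow> 1 \<le> k \<Longrightarrow> Hmat m n r a ((k - 1) * n + j) = (a, j, k)"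
  using blk_eq[of j n k] by (simp add: Hmat_def)

lemma Vmat_eq: "1 \<le> i \<Longrightarrow> i \<le> m \<Longrightarrow> 1 \<le> k \<Longrightarrow> Vmat m n r ((k - 1) * m + i) j = (i, j, k)"
  using blk_eq[of i m k] by (simp add: Vmat_def)

lemma lexnum: "1 \<le> (j::nat) \<Longrightarrow> j \<le> n \<Longrightarrow> 1 \<le> j' \<Longrightarrow> 1 \<le> k \<Longrightarrow> (k < k' \<or> k = k' \<and> j < j') \<Longrightarrow>
   (k - 1) * n + j < (k' - 1) * n + j'"
proof -
  assume a: "1 \<le> j" "j \<le> n" "1 \<le> j'" "1 \<le> k" "k < k' \<or> k = k' \<and> j < j'"
  show ?thesis
  proof (cases "k < k'")
    case True
    have "(k - 1) * n + j \<le> (k - 1) * n + n" using a by simp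
    also have "\<dots> = k * n" using a by (cases k) auto
    also have "\<dots> \<le> (k' - 1) * n" using True by (intro mult_le_mono1) simp
    finally show ?thesis using a by simp
  next
    case False then show ?thesis using a by simp
  qed
qed

lemma numbound: "1 \<le> (k'::nat) \<Longrightarrow> k' \<le> r \<Longrightarrow> j' \<le> n \<Longrightarrow> (k' - 1) * n + j' \<le> n * r"
proof -
  assume a: "1 \<le> k'" "k' \<le> r" "j' \<le> n"
  have "(k' - 1) * n + j' \<le> (k' - 1) * n + n" using a by simp
  also have "\<dots> = k' * n" using a by (cases k') auto
  also have "\<dots> \<le> r * n" using a by (intro mult_le_mono1) simp
  finally show ?thesis by (simp add: mult.commute)
qed

lemma Dg_irrefl: "\<not> Dg p p"
  by (cases p) (simp add: Dg_simp)

lemma Dg_minor: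
  assumes mnr: "0 < m" "0 < n" "0 < r" and p: "p \<in> varset m n r" and q: "q \<in> varset m n r" and D: "Dg p q"
  shows "\<exists>X a b c d. isminor m n r X a b c d \<and> X a c = p \<and> X b d = q"
proof -
  obtain i j k where pe: "p = (i,j,k)" by (cases p) auto
  obtain i' j' k' where qe: "q = (i',j',k')" by (cases q) auto
  have b: "1 \<le> i" "i \<le> m" "1 \<le> j" "j \<le> n" "1 \<le> k" "k \<le> r"
          "1 \<le> i'" "i' \<le> m" "1 \<le> j'" "j' \<le> n" "1 \<le> k'" "k' \<le> r"
    using p q pe qe by (auto simp: varset_def)
  have D': "(i < i' \<and> (k < k' \<or> k = k' \<and> j < j')) \<or> ((k < k' \<or> k = k' \<and> i < i') \<and> j < j')"
    using D pe qe by (simp add: Dg_simp)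
  show ?thesis
  proof (cases "i < i' \<and> (k < k' \<or> k = k' \<and> j < j')")
    case True
    define c where "c = (k - 1) * n + j"
    define d where "d = (k' - 1) * n + j'"
    have cd: "c < d" unfolding c_def d_def using lexnum[of j n j' k k'] b True by simp
    have "1 \<le> c" using b by (simp add: c_def)
    moreover have "d \<le> n * r" unfolding d_def using numbound[of k' r j' n] b by simp
    ultimately have "isminor m n r (Hmat m n r) i i' c d"
      using cd True b by (simp add: isminor_def minor_idx_def)
    moreover have "Hmat m n r i c = p" "Hmat m n r i' d = q"
      using Hmat_eq b pe qe by (auto simp: c_def d_def)
    ultimately show ?thesis by blast
  next
    case False
    then have F: "(k < k' \<or> k = k' \<and> i < i') \<and> j < j'" using D' by blast
    define a where "a = (k - 1) * m + i"
    define bb where "bb = (k' - 1) * m + i'"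
    have ab: "a < bb" unfolding a_def bb_def using lexnum[of i m i' k k'] b F by simp
    have "1 \<le> a" using b by (simp add: a_def)
    moreover have "bb \<le> m * r" unfolding bb_def using numbound[of k' r i' m] b by simp
    ultimately have "isminor m n r (Vmat m n r) a bb j j'"
      using ab F b by (simp add: isminor_def minor_idx_def)
    moreover have "Vmat m n r a j = p" "Vmat m n r bb j' = q"
      using Vmat_eq b pe qe by (auto simp: a_def bb_def)
    ultimately show ?thesis by blast
  qed
qed

lemma Hmat_in: "0 < n \<Longrightarrow> 1 \<le> a \<Longrightarrow> a \<le> m \<Longrightarrow> 1 \<le> c \<Longrightarrow> c \<le> n * r \<Longrightarrow> Hmat m n r a c \<in> varset m n r"
proof -
  assume h: "0 < n" "1 \<le> a" "a \<le> m" "1 \<le> c" "c \<le> n * r"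
  have "c - 1 < r * n" using h by (simp add: mult.commute)
  then have "(c - 1) div n < r" using h by (simp add: div_less_iff_less_mult)
  moreover have "(c - 1) mod n < n" using h by simp
  ultimately show ?thesis using h by (simp add: Hmat_def varset_def Suc_le_eq)
qed

lemma Vmat_in: "0 < m \<Longrightarrow> 1 \<le> a \<Longrightarrow> a \<le> m * r \<Longrightarrow> 1 \<le> c \<Longrightarrow> c \<le> n \<Longrightarrow> Vmat m n r a c \<in> varset m n r"
proof -
  assume h: "0 < m" "1 \<le> a" "a \<le> m * r" "1 \<le> c" "c \<le> n"
  have "a - 1 < r * m" using h by (simp add: mult.commute)
  then have "(a - 1) div m < r" using h by (simp add: div_less_iff_less_mult)
  moreover have "(a - 1) mod m < m" using h by simp
  ultimately show ?thesis using h by (simp add: Vmat_def varset_def Suc_le_eq)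
qed

lemma idx_inj: "0 < (n::nat) \<Longrightarrow> 1 \<le> c \<Longrightarrow> 1 \<le> d \<Longrightarrow> (c - 1) mod n = (d - 1) mod n \<Longrightarrow> (c - 1) div n = (d - 1) div n \<Longrightarrow> c = d"
proof -
  assume h: "0 < n" "1 \<le> c" "1 \<le> d" "(c - 1) mod n = (d - 1) mod n" "(c - 1) div n = (d - 1) div n"
  have "c - 1 = (c - 1) div n * n + (c - 1) mod n" by simp
  also have "\<dots> = (d - 1) div n * n + (d - 1) mod n" using h by simp
  also have "\<dots> = d - 1" by simp
  finally show "c = d" using h by simp
qed

lemma minor_facts:
  assumes mnr: "0 < m" "0 < n" "0 < r" and M: "isminor m n r X a b c d"
  shows "X a c \<in> varset m n r \<and> X b d \<in> varset m n r \<and> X a d \<in> varset m n r \<and> X b c \<in> varset m n r \<and>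
         X a c \<noteq> X a d \<and> X a c \<noteq> X b c \<and> mgs (diag_mon X a b c d) = mgs (antidiag_mon X a b c d)"
  using M
proof (unfold isminor_def, elim disjE conjE)
  assume X: "X = Hmat m n r" and idx: "(a,b,c,d) \<in> minor_idx m (n*r)"
  have i: "1 \<le> a" "a < b" "b \<le> m" "1 \<le> c" "c < d" "d \<le> n * r" using idx by (auto simp: minor_idx_def)
  have v: "X a c \<in> varset m n r" "X b d \<in> varset m n r" "X a d \<in> varset m n r" "X b c \<in> varset m n r"
    using Hmat_in[OF mnr(2)] i X by auto
  have ne1: "X a c \<noteq> X a d" using idx_inj[OF mnr(2), of c d] i X by (auto simp: Hmat_def)
  have ne2: "X a c \<noteq> X b c" using i X by (simp add: Hmat_def)
  have mg: "mgs (diag_mon X a b c d) = mgs (antidiag_mon X a b c d)"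
    unfolding diag_mon_def antidiag_mon_def mgs_pair X by (simp add: Hmat_def add_mset_commute)
  show ?thesis using v ne1 ne2 mg by blast
next
  assume X: "X = Vmat m n r" and idx: "(a,b,c,d) \<in> minor_idx (m*r) n"
  have i: "1 \<le> a" "a < b" "b \<le> m * r" "1 \<le> c" "c < d" "d \<le> n" using idx by (auto simp: minor_idx_def)
  have v: "X a c \<in> varset m n r" "X b d \<in> varset m n r" "X a d \<in> varset m n r" "X b c \<in> varset m n r"
    using Vmat_in[OF mnr(1)] i X by auto
  have ne1: "X a c \<noteq> X a d" using i X by (simp add: Vmat_def)
  have ne2: "X a c \<noteq> X b c" using idx_inj[OF mnr(1), of a b] i X by (auto simp: Vmat_def)
  have mg: "mgs (diag_mon X a b c d) = mgs (antidiag_mon X a b c d)"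
    unfolding diag_mon_def antidiag_mon_def mgs_pair X by (simp add: Vmat_def add_mset_commute)
  show ?thesis using v ne1 ne2 mg by blast
qed


section \<open>The invariant of the ideal\<close>

definition Zp :: "nat \<Rightarrow> nat \<Rightarrow> nat \<Rightarrow> 'a::field mpoly \<Rightarrow> bool" where
  "Zp m n r f \<longleftrightarrow> (\<forall>d c. lam (\<lambda>t. okm m n r t \<and> mgs (t + d) = c) f = 0)"

lemma okm_add: "okm m n r (s + t) \<longleftrightarrow> okm m n r s \<and> okm m n r t"
  by (auto simp: okm_def keys_add_mon)

lemma keys_var: "Poly_Mapping.keys (var_mon v) = {v}"
  by (simp add: var_mon_def)

lemma okm_pair: "x \<in> varset m n r \<Longrightarrow> y \<in> varset m n r \<Longrightarrow> okm m n r (var_mon x + var_mon y)"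
  unfolding okm_add by (simp add: okm_def keys_var)

lemma Zp_zero: "Zp m n r 0" by (simp add: Zp_def lam_zero)

lemma Zp_add: "Zp m n r f \<Longrightarrow> Zp m n r g \<Longrightarrow> Zp m n r (f + g)"
  by (simp add: Zp_def lam_add)

lemma Zp_mult:
  assumes q: "q \<in> ring_R m n r" and f: "Zp m n r f"
  shows "Zp m n r (q * f)"
  unfolding Zp_def
proof (intro allI)
  fix d c
  let ?C = "\<lambda>t. okm m n r t \<and> mgs (t + d) = c"
  have "q * f = (\<Sum>s\<in>Poly_Mapping.keys q. Poly_Mapping.single s (Poly_Mapping.lookup q s)) * f"
    by (rule arg_cong[OF poly_expand])
  also have "\<dots> = (\<Sum>s\<in>Poly_Mapping.keys q. Poly_Mapping.single s (Poly_Mapping.lookup q s) * f)"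
    by (simp only: sum_distrib_right)
  finally have "lam ?C (q * f) = (\<Sum>s\<in>Poly_Mapping.keys q. lam ?C (Poly_Mapping.single s (Poly_Mapping.lookup q s) * f))"
    by (simp only: lam_sum finite_keys)
  also have "\<dots> = (\<Sum>s\<in>Poly_Mapping.keys q. Poly_Mapping.lookup q s * lam (\<lambda>t. ?C (s + t)) f)"
    by (simp only: lam_single_mult)
  also have "\<dots> = 0"
  proof (rule sum.neutral, rule ballI)
    fix s assume s: "s \<in> Poly_Mapping.keys q"
    then have oks: "okm m n r s" using q by (auto simp: ring_R_def okm_def)
    have "(\<lambda>t. ?C (s + t)) = (\<lambda>t. okm m n r t \<and> mgs (t + (s + d)) = c)"
      using oks by (auto simp: okm_add add_ac fun_eq_iff)
    moreover have "lam (\<lambda>t. okm m n r t \<and> mgs (t + (s + d)) = c) f = 0"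
      using f unfolding Zp_def by blast
    ultimately have "lam (\<lambda>t. ?C (s + t)) f = 0" by simp
    then show "Poly_Mapping.lookup q s * lam (\<lambda>t. ?C (s + t)) f = 0" by simp
  qed
  finally show "lam ?C (q * f) = 0" .
qed

lemma Zp_minor:
  assumes mnr: "0 < m" "0 < n" "0 < r" and M: "isminor m n r X a b c d"
  shows "Zp m n r (minor2 X a b c d)"
  unfolding Zp_def
proof (intro allI)
  fix e c'
  let ?C = "\<lambda>t. okm m n r t \<and> mgs (t + e) = c'"
  note mf = minor_facts[OF mnr M]
  have "okm m n r (diag_mon X a b c d)" "okm m n r (antidiag_mon X a b c d)"
    using mf by (auto simp: diag_mon_def antidiag_mon_def intro!: okm_pair)
  moreover have "mgs (diag_mon X a b c d + e) = mgs (antidiag_mon X a b c d + e)"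
    using mf mgs_add_cong by blast
  ultimately have "?C (diag_mon X a b c d) = ?C (antidiag_mon X a b c d)" by simp
  then show "lam ?C (minor2 X a b c d) = 0"
    by (simp add: minor2_def lam_minus lam_single)
qed

lemma minors_isminor: "g \<in> minors_H m n r \<union> minors_V m n r \<Longrightarrow> \<exists>X a b c d. isminor m n r X a b c d \<and> g = minor2 X a b c d"
  unfolding minors_H_def minors_V_def isminor_def by blast

lemma isminor_in: "isminor m n r X a b c d \<Longrightarrow> minor2 X a b c d \<in> minors_H m n r \<union> minors_V m n r"
  by (auto simp: minors_H_def minors_V_def isminor_def)

lemma Zp_ideal:
  assumes mnr: "0 < m" "0 < n" "0 < r" and f: "f \<in> I_mnr m n r"
  shows "Zp m n r f"
  using f unfolding I_mnr_def
proof (induction rule: ideal_gen.induct)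
  case zero then show ?case by (rule Zp_zero)
next
  case (gen g)
  then obtain X a b c d where "isminor m n r X a b c d" "g = minor2 X a b c d"
    using minors_isminor by blast
  then show ?case using Zp_minor[OF mnr] by simp
next
  case (add f h) then show ?case using Zp_add by blast
next
  case (mult f q) then show ?case using Zp_mult by blast
qed



lemma lookup_pair: "Poly_Mapping.lookup (var_mon x + var_mon y) v = (if x = v then 1 else 0) + (if y = v then 1 else 0)"
  by (simp add: var_mon_def lookup_add lookup_single when_def)

lemma minor_diag_ne:
  assumes mnr: "0 < m" "0 < n" "0 < r" and M: "isminor m n r X a b c d"
  shows "diag_mon X a b c d \<noteq> antidiag_mon X a b c d"
proof
  assume e: "diag_mon X a b c d = antidiag_mon X a b c d"
  note mf = minor_facts[OF mnr M]
  have "Poly_Mapping.lookup (diag_mon X a b c d) (X a c) \<noteq> 0"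
    by (simp add: diag_mon_def lookup_pair)
  moreover have "Poly_Mapping.lookup (antidiag_mon X a b c d) (X a c) = 0"
    using mf by (auto simp: antidiag_mon_def lookup_pair)
  ultimately show False using e by simp
qed

lemma minor_keys:
  assumes mnr: "0 < m" "0 < n" "0 < r" and M: "isminor m n r X a b c d"
  shows "Poly_Mapping.keys (minor2 X a b c d :: 'a::field mpoly) = {diag_mon X a b c d, antidiag_mon X a b c d}"
  unfolding minor2_def by (rule keys_binom[OF minor_diag_ne[OF mnr M]])

lemma minor_lead:
  assumes mnr: "0 < m" "0 < n" "0 < r" and M: "isminor m n r X a b c d"
    and dgo: "diagonal_order m n r le"
  shows "lead_mon le (minor2 X a b c d :: 'a::field mpoly) = diag_mon X a b c d"
proof -
  have "lead_mon le (minor2 X a b c d :: 'a mpoly) = lead_mon le (minor2 X a b c d :: rat mpoly)"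
    by (rule lead_mon_keys) (simp add: minor_keys[OF mnr M])
  also have "\<dots> = diag_mon X a b c d"
    using M dgo unfolding isminor_def diagonal_order_def by auto
  finally show ?thesis .
qed

lemma minor_anti_le:
  assumes mnr: "0 < m" "0 < n" "0 < r" and M: "isminor m n r X a b c d"
    and to: "term_order le" and dgo: "diagonal_order m n r le"
  shows "le (antidiag_mon X a b c d) (diag_mon X a b c d)"
proof -
  let ?g = "minor2 X a b c d :: rat mpoly"
  have k: "Poly_Mapping.keys ?g = {diag_mon X a b c d, antidiag_mon X a b c d}"
    by (rule minor_keys[OF mnr M])
  then have "?g \<noteq> 0" by auto
  from lead_mon_prop[OF to this] k minor_lead[OF mnr M dgo, where 'a=rat]
  show ?thesis by auto
qed

lemma reduce:
  assumes mnr: "0 < m" "0 < n" "0 < r" and to: "term_order le" and dgo: "diagonal_order m n r le"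
  shows "okm m n r t \<Longrightarrow> \<exists>t''. okm m n r t'' \<and> mgs t'' = mgs t \<and> cliq (Poly_Mapping.keys t'') \<and> le t'' t"
proof (induction t rule: wfp_induct_rule[OF to_wf[OF to]])
  case (1 t)
  show ?case
  proof (cases "cliq (Poly_Mapping.keys t)")
    case True then show ?thesis using 1 to_refl[OF to] by blast
  next
    case False
    then obtain p q where pq: "p \<in> Poly_Mapping.keys t" "q \<in> Poly_Mapping.keys t" "Dg p q"
      unfolding cliq_def by blast
    have pqv: "p \<in> varset m n r" "q \<in> varset m n r" using pq 1(2) by (auto simp: okm_def)
    obtain X a b c d where M: "isminor m n r X a b c d" and Xp: "X a c = p" and Xq: "X b d = q"
      using Dg_minor[OF mnr pqv pq(3)] by blast
    note mf = minor_facts[OF mnr M]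
    define D where "D = diag_mon X a b c d"
    define A where "A = antidiag_mon X a b c d"
    have DA: "D \<noteq> A" using minor_diag_ne[OF mnr M] by (simp add: D_def A_def)
    have leAD: "le A D" using minor_anti_le[OF mnr M to dgo] by (simp add: D_def A_def)
    have pneq: "p \<noteq> q" using pq(3) Dg_irrefl by blast
    have Dle: "Poly_Mapping.lookup D v \<le> Poly_Mapping.lookup t v" for v
    proof -
      have "Poly_Mapping.lookup t p \<ge> 1" "Poly_Mapping.lookup t q \<ge> 1" using pq by (auto simp: in_keys_iff)
      then show ?thesis using pneq by (auto simp: D_def diag_mon_def Xp Xq lookup_pair)
    qed
    define u where "u = t - D"
    have tu: "t = D + u"
      by (rule poly_mapping_eqI) (simp add: u_def lookup_add lookup_minus Dle)
    define t' where "t' = A + u"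
    have le1: "le t' t" unfolding t'_def using to_mono[OF to leAD] tu by simp
    have ne1: "t' \<noteq> t" unfolding t'_def using DA tu by (metis add_right_cancel)
    have oku: "okm m n r u" using 1(2) tu okm_add by metis
    have okA: "okm m n r A" unfolding A_def antidiag_mon_def using mf by (intro okm_pair) auto
    have ok': "okm m n r t'" unfolding t'_def using oku okA okm_add by blast
    have mg': "mgs t' = mgs t" unfolding t'_def using tu mf mgs_add_cong[of A D u]
      by (simp add: A_def D_def)
    obtain t'' where t'': "okm m n r t''" "mgs t'' = mgs t'" "cliq (Poly_Mapping.keys t'')" "le t'' t'"
      using 1(1)[OF _ ok'] le1 ne1 by blast
    then show ?thesis using mg' le1 to_trans[OF to] by metis
  qed
qed


lemma finite_varset: "finite (varset m n r)"
proof (rule finite_subset)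
  show "varset m n r \<subseteq> {1..m} \<times> {1..n} \<times> {1..r}" by (auto simp: varset_def)
qed simp

lemma keys_sqfree: "finite F \<Longrightarrow> Poly_Mapping.keys (sqfree_mon F) \<subseteq> F"
proof (induction F rule: finite_induct)
  case empty then show ?case by (simp add: sqfree_mon_def)
next
  case (insert x F)
  have "sqfree_mon (insert x F) = var_mon x + sqfree_mon F"
    using insert by (simp add: sqfree_mon_def)
  then show ?case using insert keys_add_mon[of "var_mon x" "sqfree_mon F"] by (auto simp: keys_var)
qed

lemma sqfree_split: "finite F \<Longrightarrow> p \<in> F \<Longrightarrow> q \<in> F \<Longrightarrow> p \<noteq> q \<Longrightarrow>
  sqfree_mon F = (var_mon p + var_mon q) + sqfree_mon (F - {p, q})"
proof -
  assume h: "finite F" "p \<in> F" "q \<in> F" "p \<noteq> q"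
  have "sqfree_mon F = var_mon p + (\<Sum>v\<in>F - {p}. var_mon v)"
    unfolding sqfree_mon_def using h by (simp add: sum.remove)
  also have "(\<Sum>v\<in>F - {p}. var_mon v) = var_mon q + (\<Sum>v\<in>F - {p} - {q}. var_mon v)"
    using h by (simp add: sum.remove)
  also have "F - {p} - {q} = F - {p, q}" by auto
  finally show ?thesis by (simp add: sqfree_mon_def add.assoc)
qed

lemma in_init:
  assumes mnr: "0 < m" "0 < n" "0 < r" and dgo: "diagonal_order m n r le"
    and F: "F \<subseteq> varset m n r" and nc: "\<not> cliq F"
  shows "sqfree_mon F \<in> init_mons m n r le (I_mnr m n r :: 'a::field mpoly set)"
proof -
  obtain p q where pq: "p \<in> F" "q \<in> F" "Dg p q" using nc unfolding cliq_def by blast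
  have pneq: "p \<noteq> q" using pq(3) Dg_irrefl by blast
  obtain X a b c d where M: "isminor m n r X a b c d" and Xp: "X a c = p" and Xq: "X b d = q"
    using Dg_minor[OF mnr _ _ pq(3)] pq F by blast
  let ?g = "minor2 X a b c d :: 'a mpoly"
  have gI: "?g \<in> I_mnr m n r" unfolding I_mnr_def using isminor_in[OF M] by (rule ideal_gen.gen)
  have g0: "?g \<noteq> 0" using minor_keys[OF mnr M, where 'a='a] by auto
  have lg: "lead_mon le ?g = var_mon p + var_mon q"
    using minor_lead[OF mnr M dgo] by (simp add: diag_mon_def Xp Xq)
  have finF: "finite F" using F finite_varset finite_subset by blast
  have "sqfree_mon F = lead_mon le ?g + sqfree_mon (F - {p, q})"
    using sqfree_split[OF finF pq(1,2) pneq] lg by simp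
  moreover have "Poly_Mapping.keys (sqfree_mon F) \<subseteq> varset m n r" using keys_sqfree[OF finF] F by blast
  ultimately show ?thesis unfolding init_mons_def using gI g0 by blast
qed

lemma cliq_mono: "cliq F \<Longrightarrow> G \<subseteq> F \<Longrightarrow> cliq G"
  unfolding cliq_def by blast

lemma not_init:
  assumes mnr: "0 < m" "0 < n" "0 < r" and to: "term_order le" and dgo: "diagonal_order m n r le"
    and F: "F \<subseteq> varset m n r" and cl: "cliq F"
  shows "sqfree_mon F \<notin> init_mons m n r le (I_mnr m n r :: 'a::field mpoly set)"
proof
  assume "sqfree_mon F \<in> init_mons m n r le (I_mnr m n r :: 'a mpoly set)"
  then obtain f u where f: "f \<in> (I_mnr m n r :: 'a mpoly set)" "f \<noteq> 0" and
    su: "sqfree_mon F = lead_mon le f + u" unfolding init_mons_def by blast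
  define L where "L = lead_mon le f"
  have finF: "finite F" using F finite_varset finite_subset by blast
  have LF: "Poly_Mapping.keys L \<subseteq> F"
  proof
    fix v assume "v \<in> Poly_Mapping.keys L"
    then have "v \<in> Poly_Mapping.keys (sqfree_mon F)" using su by (auto simp: L_def in_keys_iff lookup_add)
    then show "v \<in> F" using keys_sqfree[OF finF] by blast
  qed
  have okL: "okm m n r L" using LF F by (auto simp: okm_def)
  have clL: "cliq (Poly_Mapping.keys L)" using cliq_mono[OF cl LF] .
  note lp = lead_mon_prop[OF to f(2)]
  have Lk: "L \<in> Poly_Mapping.keys f" using lp by (simp add: L_def)
  let ?C = "\<lambda>t. okm m n r t \<and> mgs (t + 0) = mgs L"
  have Cchar: "?C t \<longleftrightarrow> t = L" if t: "t \<in> Poly_Mapping.keys f" for t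
  proof
    assume Ct: "?C t"
    obtain t'' where t'': "okm m n r t''" "mgs t'' = mgs t" "cliq (Poly_Mapping.keys t'')" "le t'' t"
      using reduce[OF mnr to dgo] Ct by blast
    have mgL: "mgs t'' = mgs L" using t'' Ct by simp
    have "ms t'' = ms L"
    proof (rule uniq_clique)
      show "cliq (set_mset (ms t''))" using t''(3) by (simp add: set_ms)
      show "cliq (set_mset (ms L))" using clL by (simp add: set_ms)
      show "image_mset cI (ms t'') = image_mset cI (ms L)" using mgL by (simp add: mgs_def)
      show "image_mset cJ (ms t'') = image_mset cJ (ms L)" using mgL by (simp add: mgs_def)
      show "image_mset cK (ms t'') = image_mset cK (ms L)" using mgL by (simp add: mgs_def)
    qed
    then have "t'' = L" by (rule ms_inj)
    then have "le L t" using t'' by simp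
    moreover have "le t L" using lp t by (simp add: L_def)
    ultimately show "t = L" using to_antisym[OF to] by blast
  next
    assume "t = L" then show "?C t" using okL by simp
  qed
  have "lam ?C f = (\<Sum>t\<in>Poly_Mapping.keys f. if t = L then Poly_Mapping.lookup f t else 0)"
    unfolding lam_def
  proof (rule sum.cong[OF refl])
    fix t assume t: "t \<in> Poly_Mapping.keys f"
    show "(if ?C t then Poly_Mapping.lookup f t else 0) = (if t = L then Poly_Mapping.lookup f t else 0)"
      by (simp only: Cchar[OF t])
  qed
  also have "\<dots> = Poly_Mapping.lookup f L" using Lk by (simp add: sum.delta')
  finally have "lam ?C f = Poly_Mapping.lookup f L" .
  moreover have "lam ?C f = 0" using Zp_ideal[OF mnr f(1)] unfolding Zp_def by blast
  ultimately show False using Lk by (simp add: in_keys_iff)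
qed

lemma SR_eq:
  assumes mnr: "0 < m" "0 < n" "0 < r" and to: "term_order le" and dgo: "diagonal_order m n r le"
  shows "SR_complex m n r le (I_mnr m n r :: 'a::field mpoly set) = CL m n r"
  unfolding SR_complex_def CL_def
  using in_init[OF mnr dgo, where 'a='a] not_init[OF mnr to dgo, where 'a='a] by blast

theorem proposition5p7:
  fixes m n r :: nat and le :: "mon \<Rightarrow> mon \<Rightarrow> bool"
  assumes "0 < m" "0 < n" "0 < r"
    and "term_order le" and "diagonal_order m n r le"
  shows "\<exists>f. bij_betw f
           (facets (SR_complex m n r le (I_mnr m n r :: ('a::field) mpoly set)))
           (words m n r)"
proof -
  have "SR_complex m n r le (I_mnr m n r :: 'a mpoly set) = CL m n r"
    by (rule SR_eq[OF assms])
  moreover have "\<exists>f. bij_betw f (facets (CL m n r)) (words m n r)"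
    using comb_main assms(1-3) by simp
  ultimately show ?thesis by simp
qed


end
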